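(* Let $\varphi\colon\mathcal{M}\to\mathcal{X}$ be a smooth lift and let $y\in\mathcal{M}$. Then $\varphi$ satisfies the "local $\Rightarrow$ local" property at $y$ if and only if $\varphi$ is open at $y$. Moreover, if $\varphi$ does not satisfy "local $\Rightarrow$ local" at $y$, then there is a smooth cost $f$ such that $y$ is a local minimum of $g=f\circ\varphi$ on $\mathcal{M}$ but $\varphi(y)$ is not a local minimum of $f$ on $\mathcal{X}$.
   Context: Let $\mathcal{E}$ be a finite-dimensional real inner product space and $\mathcal{M}$ a smooth manifold. A smooth lift of a set $\mathcal{X}\subseteq\mathcal{E}$ is a smooth map $\varphi\colon\mathcal{M}\to\mathcal{E}$ with $\varphi(\mathcal{M})=\mathcal{X}$. $\mathcal{X}$ carries the subspace topology from $\mathcal{E}$. For a cost $f$ on $\mathcal{X}$ put $g=f\circ\varphi$; local minima of $f$ on $\mathcal{X}$ (resp. of $g$ on $\mathcal{M}$) are points minimizing the function over some neighborhood in $\mathcal{X}$ (resp. $\mathcal{M}$). The lift satisfies "local $\Rightarrow$ local" at $y$ if for every continuous $f\colon\mathcal{X}\to\mathbb{R}$, whenever $y$ is a local minimum of $g$ on $\mathcal{M}$, $\varphi(y)$ is a local minimum of $f$ on $\mathcal{X}$. The map $\varphi$ is open at $y$ if it maps every neighborhood of $y$ in $\mathcal{M}$ to a neighborhood of $\varphi(y)$ in $\mathcal{X}$ (a neighborhood of a point is a set containing it in its interior). *)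

theory Defs
  imports "HOL-Analysis.Analysis"
begin

primrec iter_deriv :: "'a::real_normed_vector list \<Rightarrow> ('a \<Rightarrow> 'b::real_normed_vector) \<Rightarrow> 'a \<Rightarrow> 'b" where
  "iter_deriv [] f = f"
| "iter_deriv (v # vs) f = (\<lambda>x. frechet_derivative (iter_deriv vs f) (at x) v)"

definition smooth_on :: "'a::euclidean_space set \<Rightarrow> ('a \<Rightarrow> 'b::real_normed_vector) \<Rightarrow> bool" where
  "smooth_on S f \<longleftrightarrow> open S \<and>
     (\<forall>vs. set vs \<subseteq> Basis \<longrightarrow> iter_deriv vs f differentiable_on S)"

definition smooth_atlas :: "('m::topological_space set \<times> ('m \<Rightarrow> 'a::euclidean_space)) set \<Rightarrow> bool" where
  "smooth_atlas A \<longleftrightarrow>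
     (\<forall>(U, \<psi>)\<in>A. open U \<and> open (\<psi> ` U) \<and> inj_on \<psi> U \<and> continuous_on U \<psi>
                   \<and> continuous_on (\<psi> ` U) (inv_into U \<psi>)) \<and>
     (\<Union>(fst ` A) = UNIV) \<and>
     (\<forall>(U, \<psi>)\<in>A. \<forall>(V, \<theta>)\<in>A. smooth_on (\<psi> ` (U \<inter> V)) (\<theta> \<circ> inv_into U \<psi>))"

definition smooth_map :: "('m::topological_space set \<times> ('m \<Rightarrow> 'a::euclidean_space)) set \<Rightarrow> ('m \<Rightarrow> 'e::euclidean_space) \<Rightarrow> bool" where
  "smooth_map A \<phi> \<longleftrightarrow> (\<forall>(U, \<psi>)\<in>A. smooth_on (\<psi> ` U) (\<phi> \<circ> inv_into U \<psi>))"

definition local_min_M :: "('m::topological_space \<Rightarrow> real) \<Rightarrow> 'm \<Rightarrow> bool" where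
  "local_min_M g y \<longleftrightarrow> (\<exists>U. open U \<and> y \<in> U \<and> (\<forall>z\<in>U. g y \<le> g z))"

definition local_min_on :: "'e::topological_space set \<Rightarrow> ('e \<Rightarrow> real) \<Rightarrow> 'e \<Rightarrow> bool" where
  "local_min_on X f x \<longleftrightarrow> x \<in> X \<and> (\<exists>V. open V \<and> x \<in> V \<and> (\<forall>z\<in>X \<inter> V. f x \<le> f z))"

definition local_to_local :: "('m::topological_space \<Rightarrow> 'e::topological_space) \<Rightarrow> 'm \<Rightarrow> bool" where
  "local_to_local \<phi> y \<longleftrightarrow>
     (\<forall>f :: 'e \<Rightarrow> real. continuous_on (range \<phi>) f \<longrightarrow>
        local_min_M (f \<circ> \<phi>) y \<longrightarrow> local_min_on (range \<phi>) f (\<phi> y))"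

definition open_at :: "('m::topological_space \<Rightarrow> 'e::topological_space) \<Rightarrow> 'm \<Rightarrow> bool" where
  "open_at \<phi> y \<longleftrightarrow>
     (\<forall>N. (\<exists>U. open U \<and> y \<in> U \<and> U \<subseteq> N) \<longrightarrow>
          (\<exists>V. open V \<and> \<phi> y \<in> V \<and> V \<inter> range \<phi> \<subseteq> \<phi> ` N))"

end

theory Submission imports Defs begin
lemma exp_ge_pow: fixes x::real assumes "x \<ge> 0" shows "x^n / fact n \<le> exp x"
proof -
  have e: "exp x = (\<Sum>k. x^k / fact k)" by (simp add: exp_def field_simps)
  have s: "summable (\<lambda>k. x^k / fact k)" using summable_exp[of x] by (simp add: divide_inverse mult.commute)
  have "sum (\<lambda>k. x^k / fact k) {n} \<le> (\<Sum>k. x^k / fact k)"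
    by (rule sum_le_suminf[OF s]) (use assms in auto)
  then show ?thesis using e by simp
qed

definition psi :: "nat \<Rightarrow> real \<Rightarrow> real" where
  "psi n t = (if t > 0 then exp (-1/t) * (inverse t)^n else 0)"

lemma psi_bound:
  assumes t: "t > 0" shows "\<bar>psi n t / t\<bar> \<le> fact (n+2) * t"
proof -
  define s where "s = inverse t"
  have s: "s > 0" using t by (simp add: s_def)
  have "s^(n+2) / fact (n+2) \<le> exp s" using exp_ge_pow[of s "n+2"] s by simp
  hence "s^(n+2) \<le> exp s * fact (n+2)" by (simp add: pos_divide_le_eq del: fact_Suc)
  hence a: "s^(n+1) * s \<le> exp s * fact (n+2)" by (simp add: algebra_simps)
  have "psi n t / t = s^(n+1) / exp s" using t
    by (simp add: psi_def s_def exp_minus field_simps power_Suc)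
  also have "\<dots> \<le> fact (n+2) / s" using a s
    by (simp add: field_simps)
  also have "\<dots> = fact (n+2) * t" by (simp add: s_def divide_inverse)
  finally show ?thesis using t s by (simp add: psi_def)
qed

lemma psi_deriv0: "(psi n has_real_derivative 0) (at 0)"
proof -
  have lim: "((\<lambda>t. \<bar>t\<bar>) \<longlongrightarrow> 0) (at (0::real))"
    by (rule tendsto_rabs_zero) (rule tendsto_ident_at)
  have "((\<lambda>y. (psi n y - psi n 0) / (y - 0)) \<longlongrightarrow> 0) (at 0)"
  proof (rule tendsto_0_le[OF lim, where K="fact (n+2)"])
    show "\<forall>\<^sub>F x in at 0. norm ((psi n x - psi n 0) / (x - 0)) \<le> norm \<bar>x\<bar> * fact (n + 2)"
    proof (rule always_eventually, intro allI)
      fix x :: real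
      show "norm ((psi n x - psi n 0) / (x - 0)) \<le> norm \<bar>x\<bar> * fact (n + 2)"
      proof (cases "x > 0")
        case True then show ?thesis using psi_bound[OF True, of n] by (simp add: psi_def mult.commute)
      next
        case False then show ?thesis by (simp add: psi_def mult_nonpos_nonneg)
      qed
    qed
  qed
  then show ?thesis by (simp add: has_field_derivative_iff)
qed

lemma h_deriv: "t > 0 \<Longrightarrow> ((\<lambda>t::real. exp(-1/t) * inverse t ^ n) has_real_derivative (exp(-1/t) * inverse t ^ (n+2) - real n * (exp(-1/t) * inverse t ^ (n+1)))) (at t)"
  apply (rule derivative_eq_intros refl | simp)+
  apply (cases n)
   apply (simp_all add: field_simps)
  done

lemma psi_deriv_pos:
  assumes t: "t > 0"
  shows "(psi n has_real_derivative (psi (n+2) t - real n * psi (n+1) t)) (at t)"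
proof -
  let ?h = "\<lambda>t::real. exp (-1/t) * (inverse t)^n"
  have "(?h has_real_derivative (exp(-1/t) * inverse t ^ (n+2) - real n * (exp(-1/t) * inverse t ^ (n+1)))) (at t)"
    by (rule h_deriv[OF t])
  moreover have "exp(-1/t) * inverse t ^ (n+2) - real n * (exp(-1/t) * inverse t ^ (n+1))
      = psi (n+2) t - real n * psi (n+1) t" using t by (simp add: psi_def)
  ultimately have d: "(?h has_real_derivative (psi (n+2) t - real n * psi (n+1) t)) (at t)" by simp
  show ?thesis
    by (rule has_field_derivative_transform_within_open[OF d, of "{0<..}"]) (use t in \<open>auto simp: psi_def\<close>)
qed

lemma psi_deriv:
  "(psi n has_real_derivative (psi (n+2) t - real n * psi (n+1) t)) (at t)"
proof -
  consider "t > 0" | "t = 0" | "t < 0" by linarith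
  then show ?thesis
  proof cases
    case 1 then show ?thesis by (rule psi_deriv_pos)
  next
    case 2 then show ?thesis using psi_deriv0[of n] by (simp add: psi_def)
  next
    case 3
    have d: "((\<lambda>_. 0) has_real_derivative 0) (at t)" by simp
    have "(psi n has_real_derivative 0) (at t)"
      by (rule has_field_derivative_transform_within_open[OF d, of "{..<0}"]) (use 3 in \<open>auto simp: psi_def\<close>)
    then show ?thesis using 3 by (simp add: psi_def)
  qed
qed

inductive_set Gsm :: "('e::euclidean_space \<Rightarrow> real) set" where
  G_const: "(\<lambda>x. c) \<in> Gsm"
| G_inner: "(\<lambda>x. x \<bullet> v) \<in> Gsm"
| G_sq: "(\<lambda>x. x \<bullet> x) \<in> Gsm"
| G_add: "f \<in> Gsm \<Longrightarrow> g \<in> Gsm \<Longrightarrow> (\<lambda>x. f x + g x) \<in> Gsm"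
| G_mult: "f \<in> Gsm \<Longrightarrow> g \<in> Gsm \<Longrightarrow> (\<lambda>x. f x * g x) \<in> Gsm"
| G_psi: "g \<in> Gsm \<Longrightarrow> (\<lambda>x. psi n (g x)) \<in> Gsm"

lemma G_deriv:
  assumes "g \<in> Gsm"
  shows "\<exists>D. (\<forall>x. (g has_derivative D x) (at x)) \<and> (\<forall>v. (\<lambda>x. D x v) \<in> Gsm)"
  using assms
proof induction
  case (G_const c)
  show ?case by (rule exI[of _ "\<lambda>x h. 0"]) (auto intro: Gsm.G_const)
next
  case (G_inner v)
  show ?case
    by (rule exI[of _ "\<lambda>x h. h \<bullet> v"]) (auto intro!: derivative_eq_intros intro: Gsm.G_const)
next
  case G_sq
  have "(\<lambda>x. x \<bullet> v + v \<bullet> x) = (\<lambda>x. x \<bullet> v + x \<bullet> v)" for v :: 'a by (simp add: inner_commute)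
  moreover have "(\<lambda>x. x \<bullet> v + x \<bullet> v) \<in> Gsm" for v :: 'a by (intro Gsm.G_add Gsm.G_inner)
  ultimately show ?case
    by (intro exI[of _ "\<lambda>x h. x \<bullet> h + h \<bullet> x"]) (auto intro!: derivative_eq_intros)
next
  case (G_add f g)
  then obtain Df Dg where f: "\<forall>x. (f has_derivative Df x) (at x)" "\<forall>v. (\<lambda>x. Df x v) \<in> Gsm"
    and g: "\<forall>x. (g has_derivative Dg x) (at x)" "\<forall>v. (\<lambda>x. Dg x v) \<in> Gsm" by blast
  show ?case
    by (rule exI[of _ "\<lambda>x h. Df x h + Dg x h"]) (use f g in \<open>auto intro!: derivative_eq_intros Gsm.G_add\<close>)
next
  case (G_mult f g)
  then obtain Df Dg where f: "\<forall>x. (f has_derivative Df x) (at x)" "\<forall>v. (\<lambda>x. Df x v) \<in> Gsm"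
    and g: "\<forall>x. (g has_derivative Dg x) (at x)" "\<forall>v. (\<lambda>x. Dg x v) \<in> Gsm" by blast
  show ?case
    by (rule exI[of _ "\<lambda>x h. f x * Dg x h + Df x h * g x"])
       (use f g G_mult in \<open>auto intro!: has_derivative_mult Gsm.G_add Gsm.G_mult\<close>)
next
  case (G_psi g n)
  then obtain Dg where g: "\<forall>x. (g has_derivative Dg x) (at x)" "\<forall>v. (\<lambda>x. Dg x v) \<in> Gsm" by blast
  define P where "P u = psi (n+2) u - real n * psi (n+1) u" for u
  have pd: "(psi n has_derivative (\<lambda>h. P u * h)) (at u)" for u
    using psi_deriv[of n u] by (simp add: has_field_derivative_def P_def)
  have PG: "(\<lambda>x. P (g x)) \<in> Gsm"
  proof -
    have "(\<lambda>x. psi (n+2) (g x) + (- real n) * psi (n+1) (g x)) \<in> Gsm"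
      by (intro Gsm.G_add Gsm.G_mult Gsm.G_psi Gsm.G_const G_psi)
    moreover have "(\<lambda>x. psi (n+2) (g x) + (- real n) * psi (n+1) (g x)) = (\<lambda>x. P (g x))"
      by (simp add: P_def)
    ultimately show ?thesis by simp
  qed
  show ?case
  proof (rule exI[of _ "\<lambda>x h. P (g x) * Dg x h"], intro conjI allI)
    fix x
    show "((\<lambda>x. psi n (g x)) has_derivative (\<lambda>h. P (g x) * Dg x h)) (at x)"
      using has_derivative_compose[OF g(1)[rule_format, of x] pd[of "g x"]] .
  next
    fix v
    show "(\<lambda>x. P (g x) * Dg x v) \<in> Gsm" using PG g(2) by (intro Gsm.G_mult) auto
  qed
qed

lemma G_frechet:
  assumes "g \<in> Gsm"
  shows "(\<lambda>x. frechet_derivative g (at x) v) \<in> Gsm" "g differentiable (at x)"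
proof -
  obtain D where D: "\<forall>x. (g has_derivative D x) (at x)" "\<forall>v. (\<lambda>x. D x v) \<in> Gsm"
    using G_deriv[OF assms] by blast
  have "frechet_derivative g (at x) = D x" for x using D(1) frechet_derivative_at by metis
  then show "(\<lambda>x. frechet_derivative g (at x) v) \<in> Gsm" using D(2) by simp
  show "g differentiable (at x)" using D(1) differentiable_def by blast
qed

lemma G_iter: "g \<in> Gsm \<Longrightarrow> iter_deriv vs g \<in> Gsm"
  by (induction vs) (auto intro: G_frechet)

lemma G_smooth: "g \<in> Gsm \<Longrightarrow> smooth_on UNIV g"
  unfolding smooth_on_def using G_iter G_frechet(2)
  by (metis differentiable_at_imp_differentiable_on open_UNIV)

lemma G_hasderiv:
  assumes "g \<in> Gsm"
  shows "(iter_deriv vs g has_derivative (\<lambda>h. \<Sum>i\<in>Basis. (h \<bullet> i) * iter_deriv (i#vs) g x)) (at x)"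
proof -
  have hG: "iter_deriv vs g \<in> Gsm" using G_iter[OF assms] .
  obtain D where D: "\<forall>x. (iter_deriv vs g has_derivative D x) (at x)"
    using G_deriv[OF hG] by blast
  have fd: "frechet_derivative (iter_deriv vs g) (at x) = D x" using D frechet_derivative_at by metis
  have lin: "linear (D x)" using D has_derivative_linear by blast
  have "D x h = (\<Sum>i\<in>Basis. (h \<bullet> i) * iter_deriv (i#vs) g x)" for h
  proof -
    have "D x h = D x (\<Sum>i\<in>Basis. (h \<bullet> i) *\<^sub>R i)" by (simp add: euclidean_representation)
    also have "\<dots> = (\<Sum>i\<in>Basis. (h \<bullet> i) * D x i)"
      using lin by (simp add: linear_sum linear_scale)
    finally show ?thesis using fd by simp
  qed
  then have "D x = (\<lambda>h. \<Sum>i\<in>Basis. (h \<bullet> i) * iter_deriv (i#vs) g x)" by auto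
  then show ?thesis using D by metis
qed

lemma G_scale:
  assumes "g \<in> Gsm"
  shows "iter_deriv vs (\<lambda>x. a * g x) = (\<lambda>x. a * iter_deriv vs g x)"
proof (induction vs)
  case Nil then show ?case by simp
next
  case (Cons v vs)
  have hG: "iter_deriv vs g \<in> Gsm" using G_iter[OF assms] .
  obtain D where D: "\<forall>x. (iter_deriv vs g has_derivative D x) (at x)"
    using G_deriv[OF hG] by blast
  have "((\<lambda>x. a * iter_deriv vs g x) has_derivative (\<lambda>h. a * D x h)) (at x)" for x
    using D by (auto intro!: derivative_eq_intros)
  then have "frechet_derivative (\<lambda>x. a * iter_deriv vs g x) (at x) = (\<lambda>h. a * D x h)" for x
    using frechet_derivative_at by metis
  moreover have "frechet_derivative (iter_deriv vs g) (at x) = D x" for x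
    using D frechet_derivative_at by metis
  ultimately show ?case using Cons by simp
qed

lemma G_support:
  assumes "g \<in> Gsm" "open Op" "\<forall>x\<in>Op. g x = 0" "x \<in> Op"
  shows "iter_deriv vs g x = 0"
  using assms(4)
proof (induction vs arbitrary: x)
  case Nil then show ?case using assms(3) by simp
next
  case (Cons v vs)
  have hG: "iter_deriv vs g \<in> Gsm" using G_iter[OF assms(1)] .
  obtain D where D: "\<forall>x. (iter_deriv vs g has_derivative D x) (at x)"
    using G_deriv[OF hG] by blast
  have "((\<lambda>x. 0) has_derivative (\<lambda>h. 0)) (at x)" by simp
  then have "(iter_deriv vs g has_derivative (\<lambda>h. 0)) (at x)"
    by (rule has_derivative_transform_within_open[OF _ assms(2) Cons.prems]) (use Cons.IH in auto)
  then have "frechet_derivative (iter_deriv vs g) (at x) = (\<lambda>h. 0)"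
    using frechet_derivative_at by metis
  then show ?case by simp
qed

lemma G_bounded:
  assumes "g \<in> Gsm" "\<forall>x. x \<notin> cball c r \<longrightarrow> g x = 0"
  shows "\<exists>B. \<forall>x. \<bar>iter_deriv vs g x\<bar> \<le> B"
proof -
  have hG: "iter_deriv vs g \<in> Gsm" using G_iter[OF assms(1)] .
  have "continuous_on UNIV (iter_deriv vs g)"
    using G_frechet(2)[OF hG] by (simp add: differentiable_imp_continuous_on differentiable_on_def)
  then have "compact (iter_deriv vs g ` cball c r)"
    by (meson compact_cball compact_continuous_image continuous_on_subset subset_UNIV)
  then obtain B where B: "\<forall>y\<in>iter_deriv vs g ` cball c r. norm y \<le> B"
    using compact_imp_bounded bounded_iff by metis
  have "\<bar>iter_deriv vs g x\<bar> \<le> max B 0" for x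
  proof (cases "x \<in> cball c r")
    case True then show ?thesis using B by force
  next
    case False
    have "iter_deriv vs g x = 0"
      by (rule G_support[OF assms(1) _ _ False[folded Compl_iff]]) (use assms(2) in auto)
    then show ?thesis by simp
  qed
  then show ?thesis by blast
qed

lemma G_bounded_fin:
  assumes "g \<in> Gsm" "\<forall>x. x \<notin> cball c r \<longrightarrow> g x = 0" "finite L"
  shows "\<exists>B. \<forall>vs\<in>L. \<forall>x. \<bar>iter_deriv vs g x\<bar> \<le> B"
  using assms(3)
proof induction
  case empty then show ?case by simp
next
  case (insert vs L)
  obtain B1 where B1: "\<forall>vs\<in>L. \<forall>x. \<bar>iter_deriv vs g x\<bar> \<le> B1" using insert by blast
  obtain B2 where B2: "\<forall>x. \<bar>iter_deriv vs g x\<bar> \<le> B2" using G_bounded[OF assms(1,2)] by blast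
  show ?case
  proof (intro exI[of _ "max B1 B2"] ballI allI)
    fix ws x assume "ws \<in> insert vs L"
    then show "\<bar>iter_deriv ws g x\<bar> \<le> max B1 B2" using B1 B2
      by (metis insert_iff max.coboundedI1 max.coboundedI2)
  qed
qed

lemma tail_bound:
  fixes c :: "nat \<Rightarrow> real"
  assumes b: "\<forall>k\<ge>N. \<bar>c k\<bar> \<le> (1/2)^k" and n: "n \<ge> N"
  shows "summable c" "\<bar>(\<Sum>k. c k) - (\<Sum>k<n. c k)\<bar> \<le> 2 * (1/2)^n"
proof -
  have g: "summable (\<lambda>k. (1/2::real)^k)" by (rule summable_geometric) simp
  show s: "summable c" by (rule summable_comparison_test'[OF g, of N]) (use b in auto)
  have b2: "\<bar>c (k+n)\<bar> \<le> (1/2)^n * (1/2)^k" for k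
    using b n by (metis add.commute le_add2 order_trans power_add)
  have g2: "summable (\<lambda>k. (1/2::real)^n * (1/2)^k)" using g by (rule summable_mult)
  have sa: "summable (\<lambda>k. norm (c (k+n)))"
    by (rule summable_comparison_test'[OF g2, of 0]) (use b2 in auto)
  have "(\<Sum>k. c k) - (\<Sum>k<n. c k) = (\<Sum>k. c (k+n))" using suminf_minus_initial_segment[OF s] by simp
  also have "\<bar>\<dots>\<bar> \<le> (\<Sum>k. norm (c (k+n)))" using summable_norm[OF sa] by simp
  also have "\<dots> \<le> (\<Sum>k. (1/2::real)^n * (1/2)^k)" by (rule suminf_le) (use b2 sa g2 in auto)
  also have "\<dots> = (1/2)^n * 2" using suminf_mult[OF g, of "(1/2)^n"] suminf_geometric[of "1/2::real"] by simp
  finally show "\<bar>(\<Sum>k. c k) - (\<Sum>k<n. c k)\<bar> \<le> 2 * (1/2)^n" by simp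
qed

lemma series_deriv:
  fixes b :: "nat \<Rightarrow> 'e::euclidean_space \<Rightarrow> real"
  assumes bG: "\<forall>k. b k \<in> Gsm"
    and bnd: "\<forall>k vs x. set vs \<subseteq> Basis \<and> length vs \<le> k \<longrightarrow> \<bar>iter_deriv vs (b k) x\<bar> \<le> (1/2)^k"
    and vs: "set vs \<subseteq> Basis"
  shows "((\<lambda>x. \<Sum>k. iter_deriv vs (b k) x) has_derivative
           (\<lambda>h. \<Sum>i\<in>Basis. (h \<bullet> i) * (\<Sum>k. iter_deriv (i#vs) (b k) x))) (at x)"
proof -
  define F where "F ws x = (\<Sum>k. iter_deriv ws (b k) x)" for ws x
  have tb: "\<bar>F ws x - (\<Sum>k<n. iter_deriv ws (b k) x)\<bar> \<le> 2 * (1/2)^n" "summable (\<lambda>k. iter_deriv ws (b k) x)"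
    if "set ws \<subseteq> Basis" "n \<ge> length ws" for ws x n
    using tail_bound[of "length ws" "\<lambda>k. iter_deriv ws (b k) x" n] bnd that unfolding F_def by auto
  define f' where "f' k x h = (\<Sum>i\<in>Basis. (h \<bullet> i) * iter_deriv (i#vs) (b k) x)" for k x h
  define g' where "g' x h = (\<Sum>i\<in>Basis. (h \<bullet> i) * F (i#vs) x)" for x h
  have "\<exists>g. \<forall>x\<in>UNIV. (\<lambda>k. iter_deriv vs (b k) x) sums (g x) \<and> (g has_derivative g' x) (at x within UNIV)"
  proof (rule has_derivative_series[where f' = f'])
    show "convex (UNIV :: 'e set)" by simp
    show "(iter_deriv vs (b k) has_derivative f' k x) (at x within UNIV)" for k x
      unfolding f'_def using G_hasderiv[OF bG[rule_format, of k]] by simp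
    show "(\<lambda>k. iter_deriv vs (b k) x) sums (F vs x)"
      using tb(2)[OF vs order_refl] unfolding F_def by (simp add: summable_sums)
  next
    fix e :: real assume e: "e > 0"
    define C where "C = 2 * real DIM('e)"
    have "((\<lambda>n. C * (1/2::real)^n) \<longlongrightarrow> C * 0) sequentially"
      by (intro tendsto_mult tendsto_const LIMSEQ_power_zero) simp
    then have ev1: "\<forall>\<^sub>F n in sequentially. C * (1/2::real)^n < e" using e
      by (simp add: order_tendsto_iff)
    have ev2: "\<forall>\<^sub>F n in sequentially. n \<ge> Suc (length vs)" by (rule eventually_ge_at_top)
    show "\<forall>\<^sub>F n in sequentially. \<forall>x\<in>UNIV. \<forall>h. norm (sum (\<lambda>i. f' i x h) {..<n} - g' x h) \<le> e * norm h"
      using ev1 ev2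
    proof eventually_elim
      case (elim n)
      show ?case
      proof (intro ballI allI)
        fix x :: 'e and h :: 'e
        have eq: "sum (\<lambda>k. f' k x h) {..<n} - g' x h
            = (\<Sum>i\<in>Basis. (h \<bullet> i) * ((\<Sum>k<n. iter_deriv (i#vs) (b k) x) - F (i#vs) x))"
          unfolding f'_def g'_def
          by (simp add: sum.swap[of _ "{..<n}"] sum_distrib_left sum_subtractf right_diff_distrib)
        have "\<bar>(h \<bullet> i) * ((\<Sum>k<n. iter_deriv (i#vs) (b k) x) - F (i#vs) x)\<bar> \<le> norm h * (2 * (1/2)^n)"
          if i: "i \<in> Basis" for i
        proof -
          have "\<bar>(\<Sum>k<n. iter_deriv (i#vs) (b k) x) - F (i#vs) x\<bar> \<le> 2 * (1/2)^n"
            using tb(1)[of "i#vs" n x] vs i elim by (simp add: abs_minus_commute)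
          moreover have "\<bar>h \<bullet> i\<bar> \<le> norm h" using i by (simp add: Basis_le_norm)
          ultimately show ?thesis by (simp add: abs_mult mult_mono')
        qed
        then have "norm (sum (\<lambda>k. f' k x h) {..<n} - g' x h) \<le> (\<Sum>i\<in>(Basis::'e set). norm h * (2 * (1/2)^n))"
          unfolding eq real_norm_def by (intro order_trans[OF sum_abs] sum_mono) auto
        also have "\<dots> = norm h * (C * (1/2)^n)" by (simp add: C_def)
        also have "\<dots> \<le> e * norm h" using elim(1) by (metis less_imp_le mult.commute mult_left_mono norm_ge_zero)
        finally show "norm (sum (\<lambda>i. f' i x h) {..<n} - g' x h) \<le> e * norm h" .
      qed
    qed
  qed simp
  then obtain g where g: "\<forall>x. (\<lambda>k. iter_deriv vs (b k) x) sums (g x) \<and> (g has_derivative g' x) (at x)"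
    by auto
  have gF: "g = F vs"
  proof (rule ext)
    fix x show "g x = F vs x" using g sums_unique unfolding F_def by blast
  qed
  have "(F vs has_derivative g' x) (at x)" using g gF by simp
  then show ?thesis unfolding F_def[abs_def] g'_def by simp
qed

lemma series_smooth:
  fixes b :: "nat \<Rightarrow> 'e::euclidean_space \<Rightarrow> real"
  assumes bG: "\<forall>k. b k \<in> Gsm"
    and bnd: "\<forall>k vs x. set vs \<subseteq> Basis \<and> length vs \<le> k \<longrightarrow> \<bar>iter_deriv vs (b k) x\<bar> \<le> (1/2)^k"
  shows "smooth_on UNIV (\<lambda>x. \<Sum>k. b k x)"
proof -
  have it: "iter_deriv vs (\<lambda>x. \<Sum>k. b k x) = (\<lambda>x. \<Sum>k. iter_deriv vs (b k) x)"
    if "set vs \<subseteq> Basis" for vs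
    using that
  proof (induction vs)
    case Nil then show ?case by simp
  next
    case (Cons v vs)
    have v: "v \<in> Basis" and vs: "set vs \<subseteq> Basis" using Cons.prems by auto
    have "frechet_derivative (\<lambda>x. \<Sum>k. iter_deriv vs (b k) x) (at x)
        = (\<lambda>h. \<Sum>i\<in>Basis. (h \<bullet> i) * (\<Sum>k. iter_deriv (i#vs) (b k) x))" for x
      by (rule frechet_derivative_at[OF series_deriv[OF bG bnd vs], symmetric])
    moreover have "(\<Sum>i\<in>Basis. (v \<bullet> i) * (\<Sum>k. iter_deriv (i#vs) (b k) x)) = (\<Sum>k. iter_deriv (v#vs) (b k) x)" for x
    proof -
      have "(\<Sum>i\<in>Basis. (v \<bullet> i) * (\<Sum>k. iter_deriv (i#vs) (b k) x))
          = (\<Sum>i\<in>Basis. if i = v then (\<Sum>k. iter_deriv (i#vs) (b k) x) else 0)"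
        by (rule sum.cong) (use v in \<open>auto simp: inner_Basis\<close>)
      also have "\<dots> = (\<Sum>k. iter_deriv (v#vs) (b k) x)" using v by simp
      finally show ?thesis .
    qed
    ultimately show ?case using Cons.IH[OF vs] by simp
  qed
  show ?thesis
    unfolding smooth_on_def
  proof (intro conjI allI impI open_UNIV)
    fix vs :: "'e list" assume vs: "set vs \<subseteq> Basis"
    show "iter_deriv vs (\<lambda>x. \<Sum>k. b k x) differentiable_on UNIV"
      unfolding it[OF vs] differentiable_on_def differentiable_def
      using series_deriv[OF bG bnd vs] by blast
  qed
qed

lemma smooth_sep:
  fixes C :: "'e::euclidean_space set" and x :: "nat \<Rightarrow> 'e"
  assumes C: "closed C" and xC: "\<forall>k. x k \<notin> C"
  shows "\<exists>f :: 'e \<Rightarrow> real. smooth_on UNIV f \<and> (\<forall>z\<in>C. f z = 0) \<and> (\<forall>k. f (x k) < 0)"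
proof -
  have "\<exists>r>0. ball (x k) r \<subseteq> - C" for k
    using C xC open_contains_ball by (metis ComplI open_Compl)
  then have "\<forall>k. \<exists>r. r > 0 \<and> ball (x k) r \<subseteq> - C" by blast
  from choice[OF this] obtain r where r: "\<forall>k. r k > 0 \<and> ball (x k) (r k) \<subseteq> - C" by blast
  define \<beta> where "\<beta> k z = psi 0 ((r k)^2 - (z \<bullet> z - 2 * (z \<bullet> x k) + x k \<bullet> x k))" for k z
  have \<beta>G: "\<beta> k \<in> Gsm" for k
  proof -
    have "(\<lambda>z. psi 0 ((\<lambda>z. (r k ^ 2 - x k \<bullet> x k)) z + ((\<lambda>z. z \<bullet> z) z + (\<lambda>z. (-2) * (z \<bullet> x k)) z) * (\<lambda>z. -1) z)) \<in> Gsm"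
      by (intro Gsm.intros)
    moreover have "(\<lambda>z. psi 0 ((\<lambda>z. (r k ^ 2 - x k \<bullet> x k)) z + ((\<lambda>z. z \<bullet> z) z + (\<lambda>z. (-2) * (z \<bullet> x k)) z) * (\<lambda>z. -1) z)) = \<beta> k"
      by (auto simp: \<beta>_def algebra_simps intro!: ext arg_cong[where f="psi 0"])
    ultimately show ?thesis by simp
  qed
  have \<beta>n: "\<beta> k z = psi 0 ((r k)^2 - (dist z (x k))^2)" for k z
  proof -
    have "(dist z (x k))^2 = (z - x k) \<bullet> (z - x k)" by (simp add: dist_norm dot_square_norm)
    also have "\<dots> = z \<bullet> z - 2 * (z \<bullet> x k) + x k \<bullet> x k" by (simp add: inner_diff inner_commute)
    finally show ?thesis by (simp add: \<beta>_def)
  qed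
  have \<beta>0: "\<beta> k z = 0" if "z \<notin> ball (x k) (r k)" for k z
  proof -
    have "dist (x k) z \<ge> r k" using that by simp
    then have "(r k)^2 \<le> (dist z (x k))^2" using r by (simp add: dist_commute power_mono less_imp_le)
    then show ?thesis by (simp add: \<beta>n psi_def)
  qed
  have \<beta>pos: "\<beta> k (x k) > 0" for k using r[rule_format, of k] by (simp add: \<beta>n psi_def)
  have \<beta>nn: "\<beta> k z \<ge> 0" for k z by (simp add: \<beta>_def psi_def)
  have "\<exists>B. \<forall>vs\<in>{vs. set vs \<subseteq> Basis \<and> length vs \<le> k}. \<forall>z. \<bar>iter_deriv vs (\<beta> k) z\<bar> \<le> B" for k
  proof (rule G_bounded_fin[OF \<beta>G])
    show "\<forall>z. z \<notin> cball (x k) (r k) \<longrightarrow> \<beta> k z = 0" using \<beta>0 by auto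
    show "finite {vs. set vs \<subseteq> (Basis::'e set) \<and> length vs \<le> k}" by (rule finite_lists_length_le) simp
  qed
  then have ex: "\<forall>k. \<exists>B. \<forall>vs\<in>{vs. set vs \<subseteq> Basis \<and> length vs \<le> k}. \<forall>z. \<bar>iter_deriv vs (\<beta> k) z\<bar> \<le> B"
    by blast
  from choice[OF ex] obtain B where B0: "\<forall>k. \<forall>vs\<in>{vs. set vs \<subseteq> Basis \<and> length vs \<le> k}. \<forall>z. \<bar>iter_deriv vs (\<beta> k) z\<bar> \<le> B k"
    by blast
  then have B: "\<forall>k. \<forall>vs. set vs \<subseteq> Basis \<and> length vs \<le> k \<longrightarrow> (\<forall>z. \<bar>iter_deriv vs (\<beta> k) z\<bar> \<le> B k)"
    by blast
  define a where "a k = (1/2::real)^k / (1 + \<bar>B k\<bar>)" for k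
  have apos: "a k > 0" for k by (simp add: a_def add_pos_nonneg)
  define b where "b k z = (- a k) * \<beta> k z" for k z
  have bG: "\<forall>k. b k \<in> Gsm"
    unfolding b_def by (intro allI Gsm.G_mult Gsm.G_const \<beta>G)
  have bnd: "\<forall>k vs z. set vs \<subseteq> Basis \<and> length vs \<le> k \<longrightarrow> \<bar>iter_deriv vs (b k) z\<bar> \<le> (1/2)^k"
  proof (intro allI impI)
    fix k vs z assume h: "set vs \<subseteq> (Basis::'e set) \<and> length vs \<le> k"
    have "iter_deriv vs (b k) z = (- a k) * iter_deriv vs (\<beta> k) z"
      unfolding b_def[abs_def] using G_scale[OF \<beta>G, of vs "- a k"] by metis
    then have "\<bar>iter_deriv vs (b k) z\<bar> = a k * \<bar>iter_deriv vs (\<beta> k) z\<bar>" using apos[of k]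
      by (simp add: abs_mult)
    also have "\<dots> \<le> a k * (1 + \<bar>B k\<bar>)"
    proof (rule mult_left_mono)
      have "\<bar>iter_deriv vs (\<beta> k) z\<bar> \<le> B k" using B h by blast
      then show "\<bar>iter_deriv vs (\<beta> k) z\<bar> \<le> 1 + \<bar>B k\<bar>" by linarith
      show "0 \<le> a k" using apos[of k] by simp
    qed
    also have "\<dots> = (1/2)^k" by (simp add: a_def add_pos_nonneg)
    finally show "\<bar>iter_deriv vs (b k) z\<bar> \<le> (1/2)^k" .
  qed
  define f where "f z = (\<Sum>k. b k z)" for z
  have sm: "smooth_on UNIV f" unfolding f_def[abs_def] by (rule series_smooth[OF bG bnd])
  have summ: "summable (\<lambda>k. b k z)" for z
  proof (rule tail_bound(1)[of 0 "\<lambda>k. b k z" 0])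
    show "\<forall>k\<ge>0. \<bar>b k z\<bar> \<le> (1/2)^k" using bnd[rule_format, of "[]"] by simp
  qed simp
  have fC: "f z = 0" if "z \<in> C" for z
  proof -
    have "z \<notin> ball (x k) (r k)" for k using r that by blast
    then show ?thesis by (simp add: f_def b_def \<beta>0)
  qed
  have fx: "f (x k) < 0" for k
  proof -
    have "summable (\<lambda>j. - b j (x k))" using summ summable_minus by blast
    then have "(\<Sum>j\<in>{k}. - b j (x k)) \<le> (\<Sum>j. - b j (x k))"
      by (rule sum_le_suminf) (auto simp: b_def apos \<beta>nn less_imp_le)
    also have "\<dots> = - f (x k)" unfolding f_def using suminf_minus[OF summ] by simp
    finally have "- b k (x k) \<le> - f (x k)" by simp
    moreover have "b k (x k) < 0" using apos \<beta>pos by (simp add: b_def mult_pos_pos)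
    ultimately show ?thesis by simp
  qed
  show ?thesis using sm fC fx by (intro exI[of _ f]) auto
qed

theorem theorem2p3:
  fixes A :: "('m::{t2_space, second_countable_topology} set \<times> ('m \<Rightarrow> 'a::euclidean_space)) set"
    and \<phi> :: "'m \<Rightarrow> 'e::euclidean_space"
    and y :: 'm
  assumes "smooth_atlas A"
    and "smooth_map A \<phi>"
  shows "(local_to_local \<phi> y \<longleftrightarrow> open_at \<phi> y) \<and>
         (\<not> local_to_local \<phi> y \<longrightarrow>
            (\<exists>f :: 'e \<Rightarrow> real. smooth_on UNIV f \<and> local_min_M (f \<circ> \<phi>) y
                \<and> \<not> local_min_on (range \<phi>) f (\<phi> y)))"
proof -
  have o2l: "local_to_local \<phi> y" if oa: "open_at \<phi> y"
    unfolding local_to_local_def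
  proof (intro allI impI)
    fix f :: "'e \<Rightarrow> real"
    assume "local_min_M (f \<circ> \<phi>) y"
    then obtain U where U: "open U" "y \<in> U" "\<forall>z\<in>U. f (\<phi> y) \<le> f (\<phi> z)"
      unfolding local_min_M_def by auto
    obtain V where V: "open V" "\<phi> y \<in> V" "V \<inter> range \<phi> \<subseteq> \<phi> ` U"
      using oa U(1,2) unfolding open_at_def by blast
    show "local_min_on (range \<phi>) f (\<phi> y)"
      unfolding local_min_on_def
    proof (intro conjI exI[of _ V])
      show "\<forall>z\<in>range \<phi> \<inter> V. f (\<phi> y) \<le> f z"
      proof
        fix z assume "z \<in> range \<phi> \<inter> V"
        then have "z \<in> \<phi> ` U" using V(3) by blast
        then obtain u where "u \<in> U" "z = \<phi> u" by blast
        then show "f (\<phi> y) \<le> f z" using U(3) by simp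
      qed
    qed (use V in auto)
  qed
  have constr: "\<exists>f :: 'e \<Rightarrow> real. smooth_on UNIV f \<and> local_min_M (f \<circ> \<phi>) y
                \<and> \<not> local_min_on (range \<phi>) f (\<phi> y)" if noa: "\<not> open_at \<phi> y"
  proof -
    from noa obtain N where N1: "\<exists>U. open U \<and> y \<in> U \<and> U \<subseteq> N"
      and N2: "\<not> (\<exists>V. open V \<and> \<phi> y \<in> V \<and> V \<inter> range \<phi> \<subseteq> \<phi> ` N)"
      unfolding open_at_def by blast
    from N1 obtain U where U: "open U" "y \<in> U" "U \<subseteq> N" by blast
    have NV: "\<forall>V. open V \<and> \<phi> y \<in> V \<longrightarrow> \<not> (V \<inter> range \<phi> \<subseteq> \<phi> ` N)" using N2 by blast
    have "\<Union>(fst ` A) = UNIV" using assms(1)[unfolded smooth_atlas_def] by (elim conjE)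
    then have "y \<in> \<Union>(fst ` A)" by simp
    then obtain p where p: "p \<in> A" "y \<in> fst p" by blast
    obtain U0 \<psi> where pe: "p = (U0, \<psi>)" by (cases p)
    have ch: "(U0, \<psi>) \<in> A" "y \<in> U0" using p pe by auto
    have U0: "open U0" "open (\<psi> ` U0)" "inj_on \<psi> U0" "continuous_on U0 \<psi>"
        "continuous_on (\<psi> ` U0) (inv_into U0 \<psi>)"
    proof -
      have "\<forall>p\<in>A. case p of (U, \<psi>) \<Rightarrow> open U \<and> open (\<psi> ` U) \<and> inj_on \<psi> U \<and> continuous_on U \<psi>
                   \<and> continuous_on (\<psi> ` U) (inv_into U \<psi>)"
        using assms(1)[unfolded smooth_atlas_def] by (elim conjE)
      from bspec[OF this ch(1)] show "open U0" "open (\<psi> ` U0)" "inj_on \<psi> U0" "continuous_on U0 \<psi>"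
        "continuous_on (\<psi> ` U0) (inv_into U0 \<psi>)" by simp_all
    qed
    have "smooth_on (\<psi> ` U0) (\<phi> \<circ> inv_into U0 \<psi>)"
      using bspec[OF assms(2)[unfolded smooth_map_def] ch(1)] by simp
    then have "(\<phi> \<circ> inv_into U0 \<psi>) differentiable_on (\<psi> ` U0)"
      unfolding smooth_on_def by (metis empty_subsetI iter_deriv.simps(1) list.set(1))
    then have phic: "continuous_on (\<psi> ` U0) (\<phi> \<circ> inv_into U0 \<psi>)"
      by (rule differentiable_imp_continuous_on)
    define O' where "O' = \<psi> ` U0 \<inter> inv_into U0 \<psi> -` (U \<inter> U0)"
    have oO: "open O'"
      using U0(2,5) U(1) U0(1) unfolding O'_def continuous_on_open_vimage[OF U0(2)]
      by (metis inf_commute open_Int)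
    have invy: "inv_into U0 \<psi> (\<psi> y) = y" using U0(3) ch(2) by (simp add: inv_into_f_f)
    have "\<psi> y \<in> O'" unfolding O'_def using invy ch(2) U(2) by auto
    then obtain \<epsilon> where \<epsilon>: "\<epsilon> > 0" "cball (\<psi> y) \<epsilon> \<subseteq> O'"
      using oO open_contains_cball by blast
    define C where "C = (\<phi> \<circ> inv_into U0 \<psi>) ` cball (\<psi> y) \<epsilon>"
    have "compact C" unfolding C_def
      by (rule compact_continuous_image[OF continuous_on_subset[OF phic]]) (use \<epsilon> in \<open>auto simp: O'_def\<close>)
    then have Ccl: "closed C" by (rule compact_imp_closed)
    define W where "W = U0 \<inter> \<psi> -` ball (\<psi> y) \<epsilon>"
    have oW: "open W" using U0(4) unfolding W_def continuous_on_open_vimage[OF U0(1)]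
      by (metis inf_commute open_ball)
    have yW: "y \<in> W" unfolding W_def using ch(2) \<epsilon> by auto
    have WC: "\<phi> z \<in> C" if "z \<in> W" for z
    proof -
      have "inv_into U0 \<psi> (\<psi> z) = z" using that U0(3) by (simp add: W_def inv_into_f_f)
      moreover have "\<psi> z \<in> cball (\<psi> y) \<epsilon>" using that by (auto simp: W_def)
      ultimately show ?thesis unfolding C_def by (metis comp_apply image_eqI)
    qed
    have CN: "C \<subseteq> \<phi> ` N"
    proof
      fix c assume "c \<in> C"
      then obtain a where a: "a \<in> cball (\<psi> y) \<epsilon>" "c = \<phi> (inv_into U0 \<psi> a)" by (auto simp: C_def)
      then have "inv_into U0 \<psi> a \<in> U" using \<epsilon> by (auto simp: O'_def)
      then show "c \<in> \<phi> ` N" using a U(3) by auto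
    qed
    have "\<forall>k. \<exists>z. z \<in> range \<phi> \<and> z \<in> ball (\<phi> y) (inverse (real (Suc k))) \<and> z \<notin> \<phi> ` N"
    proof
      fix k
      have "\<not> (ball (\<phi> y) (inverse (real (Suc k))) \<inter> range \<phi> \<subseteq> \<phi> ` N)"
        using NV by (metis centre_in_ball inverse_positive_iff_positive of_nat_0_less_iff open_ball zero_less_Suc)
      then show "\<exists>z. z \<in> range \<phi> \<and> z \<in> ball (\<phi> y) (inverse (real (Suc k))) \<and> z \<notin> \<phi> ` N" by blast
    qed
    from choice[OF this] obtain xs where xs: "\<forall>k. xs k \<in> range \<phi> \<and> xs k \<in> ball (\<phi> y) (inverse (real (Suc k))) \<and> xs k \<notin> \<phi> ` N"
      by blast
    have "\<forall>k. xs k \<notin> C" using xs CN by blast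
    from smooth_sep[OF Ccl this] obtain f :: "'e \<Rightarrow> real"
      where f: "smooth_on UNIV f" "\<forall>z\<in>C. f z = 0" "\<forall>k. f (xs k) < 0" by blast
    have fy: "f (\<phi> y) = 0" using f(2) WC[OF yW] by simp
    have lm: "local_min_M (f \<circ> \<phi>) y"
      unfolding local_min_M_def using oW yW WC f(2) fy by (intro exI[of _ W]) auto
    have nlm: "\<not> local_min_on (range \<phi>) f (\<phi> y)"
    proof
      assume "local_min_on (range \<phi>) f (\<phi> y)"
      then obtain V where V: "open V" "\<phi> y \<in> V" "\<forall>z\<in>range \<phi> \<inter> V. f (\<phi> y) \<le> f z"
        unfolding local_min_on_def by blast
      obtain e where e: "e > 0" "ball (\<phi> y) e \<subseteq> V" using V(1,2) open_contains_ball by blast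
      obtain n :: nat where n: "n > 0" "inverse (real n) < e" using ex_inverse_of_nat_less[OF e(1)] by blast
      then obtain k where k: "n = Suc k" using gr0_implies_Suc by blast
      have "xs k \<in> V" using xs e n k by (metis mem_ball order_less_trans subsetD)
      then have "f (\<phi> y) \<le> f (xs k)" using V(3) xs by blast
      then show False using fy f(3) by (metis not_less)
    qed
    show ?thesis using f(1) lm nlm by blast
  qed
  have l2o: "open_at \<phi> y" if l2l: "local_to_local \<phi> y"
  proof (rule ccontr)
    assume "\<not> open_at \<phi> y"
    then obtain f :: "'e \<Rightarrow> real" where f: "smooth_on UNIV f" "local_min_M (f \<circ> \<phi>) y"
      "\<not> local_min_on (range \<phi>) f (\<phi> y)" using constr by blast
    have "f differentiable_on UNIV" using f(1) unfolding smooth_on_def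
      by (metis empty_subsetI iter_deriv.simps(1) list.set(1))
    then have "continuous_on (range \<phi>) f"
      using differentiable_imp_continuous_on continuous_on_subset by blast
    then show False using l2l f(2,3) unfolding local_to_local_def by blast
  qed
  show ?thesis using o2l l2o constr by blast
qed
end
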